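(* Let $V$ be a vertex operator algebra and $m$ a positive integer. Then $$A_{m,0}(V)*_{m,0}^mA_{0,m}(V)\cong O_{m-1}(V)/O_m(V),$$ where the left side denotes the linear span in $A_m(V)$ of all $a*_{m,0}^mb$ with $a\in A_{m,0}(V)$, $b\in A_{0,m}(V)$.
   Context: Let $V=\bigoplus_nV_n$ be a vertex operator algebra. For homogeneous $u,v\in V$ and $m,n,p\in\mathbb Z_{\ge0}$ put $u*_{m,p}^nv=\sum_{i=0}^p(-1)^i\binom{m+n-p+i}{i}\mathrm{Res}_z\frac{(1+z)^{\mathrm{wt}\,u+m}}{z^{m+n-p+i+1}}Y(u,z)v$, $u*_m^nv=u*_{m,m}^nv$, $u\circ_m^nv=\mathrm{Res}_z\frac{(1+z)^{\mathrm{wt}\,u+m}}{z^{n+m+2}}Y(u,z)v$. $O'_{n,m}(V)$ = span of all $u\circ_m^nv$ and $L(-1)u+(L(0)+m-n)u$; $O_n(V)=O'_{n,n}(V)$ (so $O_n(V)$ is spanned by $\mathrm{Res}_zY(u,z)v\frac{(1+z)^{\mathrm{wt}\,u+n}}{z^{2n+2}}$ and $L(-1)u+L(0)u$, and $O_m(V)\subseteq O_{m-1}(V)$); $O''_{n,m}(V)$ = span of $u*_{m,p_3}^n((a*_{p_1,p_2}^{p_3}b)*_{m,p_1}^{p_3}c-a*_{m,p_2}^{p_3}(b*_{m,p_1}^{p_2}c))$; $O'''_{n,m}(V)=\sum_p(V*_p^nO_p(V))*_{m,p}^nV$; $A_{n,m}(V)=V/(O'_{n,m}+O''_{n,m}+O'''_{n,m})$.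 $A_m(V)=A_{m,m}(V)=V/O_m(V)$ is an associative algebra and $*_{m,0}^m$ induces a bilinear map $A_{m,0}(V)\times A_{0,m}(V)\to A_m(V)$. *)

theory Defs
  imports Complex_Main
begin

definition fsum :: "(nat \<Rightarrow> 'a::comm_monoid_add) \<Rightarrow> 'a" where
  "fsum f = sum f {i. f i \<noteq> 0}"

definition cspan :: "(complex \<Rightarrow> 'v::ab_group_add \<Rightarrow> 'v) \<Rightarrow> 'v set \<Rightarrow> 'v set" where
  "cspan sc A = {y. \<exists>S c. finite S \<and> S \<subseteq> A \<and> y = (\<Sum>x\<in>S. sc (c x) x)}"

text \<open>Vertex operator algebra over the complex numbers.  Y u n v is the mode u_n v,
  i.e. Y(u,z)v = sum_n u_n v z^(-n-1); Vn n is the weight-n space; L(n) = Y om (n+1).\<close>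
definition is_voa ::
  "(complex \<Rightarrow> 'v::ab_group_add \<Rightarrow> 'v) \<Rightarrow> ('v \<Rightarrow> int \<Rightarrow> 'v \<Rightarrow> 'v) \<Rightarrow> 'v \<Rightarrow> 'v \<Rightarrow> complex \<Rightarrow> (int \<Rightarrow> 'v set) \<Rightarrow> bool" where
  "is_voa sc Y vac om cc Vn \<longleftrightarrow>
     vector_space sc \<and>
     \<comment> \<open>grading: subspaces, finite dimensional, bounded below, direct sum\<close>
     (\<forall>n. 0 \<in> Vn n \<and> (\<forall>x\<in>Vn n. \<forall>y\<in>Vn n. x + y \<in> Vn n) \<and> (\<forall>a. \<forall>x\<in>Vn n. sc a x \<in> Vn n)) \<and>
     (\<forall>n. \<exists>B. finite B \<and> B \<subseteq> Vn n \<and> Vn n \<subseteq> cspan sc B) \<and>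
     (\<exists>N. \<forall>n<N. Vn n = {0}) \<and>
     (\<forall>v. \<exists>f. finite {n. f n \<noteq> 0} \<and> (\<forall>n. f n \<in> Vn n) \<and> v = sum f {n. f n \<noteq> 0}) \<and>
     (\<forall>f. finite {n. f n \<noteq> 0} \<and> (\<forall>n. f n \<in> Vn n) \<and> sum f {n. f n \<noteq> 0} = 0 \<longrightarrow> (\<forall>n. f n = 0)) \<and>
     \<comment> \<open>bilinearity of the modes\<close>
     (\<forall>u u' v n. Y (u + u') n v = Y u n v + Y u' n v) \<and>
     (\<forall>a u v n. Y (sc a u) n v = sc a (Y u n v)) \<and>
     (\<forall>u v v' n. Y u n (v + v') = Y u n v + Y u n v') \<and>
     (\<forall>a u v n. Y u n (sc a v) = sc a (Y u n v)) \<and>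
     \<comment> \<open>truncation\<close>
     (\<forall>u v. \<exists>T. \<forall>n\<ge>T. Y u n v = 0) \<and>
     \<comment> \<open>vacuum and creation\<close>
     (\<forall>v n. Y vac n v = (if n = -1 then v else 0)) \<and>
     (\<forall>u. Y u (-1) vac = u \<and> (\<forall>n\<ge>0. Y u n vac = 0)) \<and>
     vac \<in> Vn 0 \<and> om \<in> Vn 2 \<and>
     \<comment> \<open>Jacobi identity (Borcherds identity in components)\<close>
     (\<forall>u v w p q r.
        fsum (\<lambda>i. sc ((of_int p gchoose i)) (Y (Y u (r + int i) v) (p + q - int i) w)) =
        fsum (\<lambda>i. sc ((-1) ^ i * (of_int r gchoose i))
                 (Y u (p + r - int i) (Y v (q + int i) w)
                  - sc (if even r then 1 else -1) (Y v (q + r - int i) (Y u (p + int i) w))))) \<and>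
     \<comment> \<open>Virasoro relations with central charge cc, L(n) = Y om (n+1)\<close>
     (\<forall>m n v. Y om (m + 1) (Y om (n + 1) v) - Y om (n + 1) (Y om (m + 1) v) =
          sc (of_int (m - n)) (Y om (m + n + 1) v)
          + sc (if m + n = 0 then of_int (m ^ 3 - m) / 12 * cc else 0) v) \<and>
     (\<forall>n. \<forall>v\<in>Vn n. Y om 1 v = sc (of_int n) v) \<and>
     (\<forall>u n v. Y (Y om 0 u) n v = sc (of_int (- n)) (Y u (n - 1) v))"

text \<open>Res_z (1+z)^N / z^(k+1) Y(u,z)v.\<close>
definition resop :: "(complex \<Rightarrow> 'v::ab_group_add \<Rightarrow> 'v) \<Rightarrow> ('v\<Rightarrow> int \<Rightarrow> 'v \<Rightarrow> 'v) \<Rightarrow> int \<Rightarrow> int \<Rightarrow> 'v \<Rightarrow> 'v \<Rightarrow> 'v" where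
  "resop sc Y N k u v = fsum (\<lambda>j. sc ((of_int N gchoose j)) (Y u (int j - k - 1) v))"

text \<open>u *_{m,p}^n v for homogeneous u of weight w.\<close>
definition star_op :: "(complex \<Rightarrow> 'v::ab_group_add \<Rightarrow> 'v) \<Rightarrow> ('v\<Rightarrow> int \<Rightarrow> 'v \<Rightarrow> 'v) \<Rightarrow> int \<Rightarrow> nat \<Rightarrow> nat \<Rightarrow> nat \<Rightarrow> 'v \<Rightarrow> 'v \<Rightarrow> 'v" where
  "star_op sc Y w m p n u v =
     (\<Sum>i\<le>p. sc ((-1) ^ i * (of_int (int m + int n - int p + int i) gchoose i))
              (resop sc Y (w + int m) (int m + int n - int p + int i) u v))"

text \<open>u o_m^n v for homogeneous u of weight w.\<close>
definition circ_op :: "(complex \<Rightarrow> 'v::ab_group_add \<Rightarrow> 'v) \<Rightarrow> ('v\<Rightarrow> int \<Rightarrow> 'v \<Rightarrow> 'v) \<Rightarrow> int \<Rightarrow> nat \<Rightarrow> nat \<Rightarrow> 'v \<Rightarrow> 'v \<Rightarrow> 'v" where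
  "circ_op sc Y w m n u v = resop sc Y (w + int m) (int n + int m + 1) u v"

definition O_space :: "(complex \<Rightarrow> 'v::ab_group_add \<Rightarrow> 'v) \<Rightarrow> ('v\<Rightarrow> int \<Rightarrow> 'v \<Rightarrow> 'v) \<Rightarrow> 'v \<Rightarrow> (int \<Rightarrow> 'v set) \<Rightarrow> nat \<Rightarrow> 'v set" where
  "O_space sc Y om Vn n = cspan sc ({circ_op sc Y w n n u v | w u v. u \<in> Vn w} \<union> {Y om 0 u + Y om 1 u | u. True})"

end

theory Submission imports Defs "HOL-Computational_Algebra.Formal_Power_Series"
begin

lemma fsum_eq:
  assumes "\<And>i. i \<ge> K \<Longrightarrow> f i = 0"
  shows "fsum f = sum f {..<K}"
proof -
  have sub: "{i. f i \<noteq> 0} \<subseteq> {..<K}" using assms by (auto simp: not_less[symmetric])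
  show ?thesis unfolding fsum_def
    by (rule sum.mono_neutral_left) (use sub in auto)
qed

locale voa_ctx =
  fixes sc :: "complex \<Rightarrow> 'v::ab_group_add \<Rightarrow> 'v"
    and Y :: "'v \<Rightarrow> int \<Rightarrow> 'v \<Rightarrow> 'v" and vac om :: 'v and cc :: complex
    and Vn :: "int \<Rightarrow> 'v set"
  assumes voa: "is_voa sc Y vac om cc Vn"
begin

sublocale vs: vector_space sc using voa unfolding is_voa_def by auto

lemma raw1: "(\<forall>n. 0 \<in> Vn n \<and> (\<forall>x\<in>Vn n. \<forall>y\<in>Vn n. x + y \<in> Vn n) \<and> (\<forall>a. \<forall>x\<in>Vn n. sc a x \<in> Vn n))"
  using voa unfolding is_voa_def by (elim conjE) assumption
lemma raw2: "(\<forall>v. \<exists>f. finite {n. f n \<noteq> 0} \<and> (\<forall>n. f n \<in> Vn n) \<and> v = sum f {n. f n \<noteq> 0})"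
  using voa unfolding is_voa_def by (elim conjE) assumption
lemma raw3: "(\<forall>f. finite {n. f n \<noteq> 0} \<and> (\<forall>n. f n \<in> Vn n) \<and> sum f {n. f n \<noteq> 0} = 0 \<longrightarrow> (\<forall>n. f n = 0))"
  using voa unfolding is_voa_def by (elim conjE) assumption
lemma raw4: "(\<forall>u u' v n. Y (u + u') n v = Y u n v + Y u' n v)"
  using voa unfolding is_voa_def by (elim conjE) assumption
lemma raw5: "(\<forall>a u v n. Y (sc a u) n v = sc a (Y u n v))"
  using voa unfolding is_voa_def by (elim conjE) assumption
lemma raw6: "(\<forall>u v v' n. Y u n (v + v') = Y u n v + Y u n v')"
  using voa unfolding is_voa_def by (elim conjE) assumption
lemma raw7: "(\<forall>a u v n. Y u n (sc a v) = sc a (Y u n v))"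
  using voa unfolding is_voa_def by (elim conjE) assumption
lemma raw8: "(\<forall>u v. \<exists>T. \<forall>n\<ge>T. Y u n v = 0)"
  using voa unfolding is_voa_def by (elim conjE) assumption
lemma raw9: "(\<forall>u. Y u (-1) vac = u \<and> (\<forall>n\<ge>0. Y u n vac = 0))"
  using voa unfolding is_voa_def by (elim conjE) assumption
lemma raw10: "(\<forall>u v w p q r.
        fsum (\<lambda>i. sc ((of_int p gchoose i)) (Y (Y u (r + int i) v) (p + q - int i) w)) =
        fsum (\<lambda>i. sc ((-1) ^ i * (of_int r gchoose i))
                 (Y u (p + r - int i) (Y v (q + int i) w)
                  - sc (if even r then 1 else -1) (Y v (q + r - int i) (Y u (p + int i) w)))))"
  using voa unfolding is_voa_def by (elim conjE) assumption
lemma raw11: "(\<forall>m n v. Y om (m + 1) (Y om (n + 1) v) - Y om (n + 1) (Y om (m + 1) v) =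
          sc (of_int (m - n)) (Y om (m + n + 1) v)
          + sc (if m + n = 0 then of_int (m ^ 3 - m) / 12 * cc else 0) v)"
  using voa unfolding is_voa_def by (elim conjE) assumption
lemma raw12: "(\<forall>n. \<forall>v\<in>Vn n. Y om 1 v = sc (of_int n) v)"
  using voa unfolding is_voa_def by (elim conjE) assumption
lemma raw13: "(\<forall>u n v. Y (Y om 0 u) n v = sc (of_int (- n)) (Y u (n - 1) v))"
  using voa unfolding is_voa_def by (elim conjE) assumption

lemma Vn_zero: "0 \<in> Vn n" using raw1 by blast
lemma Vn_add: "x \<in> Vn n \<Longrightarrow> y \<in> Vn n \<Longrightarrow> x + y \<in> Vn n" using raw1 by blast
lemma Vn_sc: "x \<in> Vn n \<Longrightarrow> sc a x \<in> Vn n" using raw1 by blast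
lemma decomp: "\<exists>f. finite {n. f n \<noteq> 0} \<and> (\<forall>n. f n \<in> Vn n) \<and> v = sum f {n. f n \<noteq> 0}"
  using raw2 by blast
lemma uniq: "finite {n. f n \<noteq> 0} \<Longrightarrow> (\<forall>n. f n \<in> Vn n) \<Longrightarrow> sum f {n. f n \<noteq> 0} = 0 \<Longrightarrow> f n = 0"
  using raw3 by blast
lemma Y_add1: "Y (u + u') n v = Y u n v + Y u' n v" using raw4 by blast
lemma Y_sc1: "Y (sc a u) n v = sc a (Y u n v)" using raw5 by blast
lemma Y_add2: "Y u n (v + v') = Y u n v + Y u n v'" using raw6 by blast
lemma Y_sc2: "Y u n (sc a v) = sc a (Y u n v)" using raw7 by blast
lemma trunc: "\<exists>T. \<forall>n\<ge>T. Y u n v = 0" using raw8 by blast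
lemma create1: "Y u (-1) vac = u" using raw9 by blast
lemma create2: "n \<ge> 0 \<Longrightarrow> Y u n vac = 0" using raw9 by blast
lemma borch: "fsum (\<lambda>i. sc ((of_int p gchoose i)) (Y (Y u (r + int i) v) (p + q - int i) w)) =
        fsum (\<lambda>i. sc ((-1) ^ i * (of_int r gchoose i))
                 (Y u (p + r - int i) (Y v (q + int i) w)
                  - sc (if even r then 1 else -1) (Y v (q + r - int i) (Y u (p + int i) w))))"
  using raw10 by blast
lemma vir: "Y om (m + 1) (Y om (n + 1) v) - Y om (n + 1) (Y om (m + 1) v) =
          sc (of_int (m - n)) (Y om (m + n + 1) v)
          + sc (if m + n = 0 then of_int (m ^ 3 - m) / 12 * cc else 0) v"
  using raw11 by blast
lemma L0_hom: "v \<in> Vn n \<Longrightarrow> Y om 1 v = sc (of_int n) v" using raw12 by blast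
lemma Dprop: "Y (Y om 0 u) n v = sc (of_int (- n)) (Y u (n - 1) v)" using raw13 by blast

lemma Y_zero1[simp]: "Y 0 n v = 0" using Y_add1[of 0 0 n v] by simp
lemma Y_zero2[simp]: "Y u n 0 = 0" using Y_add2[of u n 0 0] by simp
lemma Y_diff1: "Y (u - u') n v = Y u n v - Y u' n v"
  using Y_add1[of "u - u'" u' n v] by (simp add: algebra_simps)
lemma Y_diff2: "Y u n (v - v') = Y u n v - Y u n v'"
  using Y_add2[of u n "v - v'" v'] by (simp add: algebra_simps)
lemma Y_sum2: "Y u n (sum f A) = (\<Sum>x\<in>A. Y u n (f x))"
  by (induction A rule: infinite_finite_induct) (auto simp: Y_add2)

lemma cspan_eq: "cspan sc A = vs.span A"
  unfolding cspan_def vs.span_explicit by auto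


lemma resop_sum:
  assumes "\<forall>n\<ge>T. Y u n v = 0" "nat (T + k + 1) \<le> C"
  shows "resop sc Y N k u v = (\<Sum>j<C. sc (of_int N gchoose j) (Y u (int j - k - 1) v))"
  unfolding resop_def
proof (rule fsum_eq)
  fix i assume "C \<le> i"
  then have "int i - k - 1 \<ge> T" using assms(2) by linarith
  then show "sc (of_int N gchoose i) (Y u (int i - k - 1) v) = 0" using assms(1) by simp
qed

lemma resop_add2: "resop sc Y N k u (v + v') = resop sc Y N k u v + resop sc Y N k u v'"
proof -
  obtain T1 where T1: "\<forall>n\<ge>T1. Y u n v = 0" using trunc by blast
  obtain T2 where T2: "\<forall>n\<ge>T2. Y u n v' = 0" using trunc by blast
  define T where "T = max T1 T2"
  have a: "\<forall>n\<ge>T. Y u n v = 0" "\<forall>n\<ge>T. Y u n v' = 0" "\<forall>n\<ge>T. Y u n (v + v') = 0"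
    using T1 T2 by (auto simp: T_def Y_add2)
  show ?thesis
    by (simp add: resop_sum[OF a(1) order_refl] resop_sum[OF a(2) order_refl]
        resop_sum[OF a(3) order_refl] Y_add2 vs.scale_right_distrib sum.distrib)
qed

lemma resop_zero2[simp]: "resop sc Y N k u 0 = 0"
  using resop_add2[of N k u 0 0] by simp

lemma resop_sum2: "resop sc Y N k u (sum f A) = (\<Sum>x\<in>A. resop sc Y N k u (f x))"
  by (induction A rule: infinite_finite_induct) (auto simp: resop_add2)

lemma resop_pascal:
  "resop sc Y (N + 1) (k + 1) u v = resop sc Y N (k + 1) u v + resop sc Y N k u v"
proof -
  obtain T where T: "\<forall>n\<ge>T. Y u n v = 0" using trunc by blast
  define C where "C = nat (T + k + 2)"
  have e1: "resop sc Y (N + 1) (k + 1) u v = (\<Sum>j<Suc C. sc (of_int (N+1) gchoose j) (Y u (int j - (k+1) - 1) v))"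
    by (rule resop_sum[OF T]) (simp add: C_def)
  have e2: "resop sc Y N (k + 1) u v = (\<Sum>j<Suc C. sc (of_int N gchoose j) (Y u (int j - (k+1) - 1) v))"
    by (rule resop_sum[OF T]) (simp add: C_def)
  have e3: "resop sc Y N k u v = (\<Sum>j<C. sc (of_int N gchoose j) (Y u (int j - k - 1) v))"
    by (rule resop_sum[OF T]) (simp add: C_def)
  have g: "(of_int (N+1) gchoose Suc i :: complex) = (of_int N gchoose i) + (of_int N gchoose Suc i)" for i
    using gbinomial_Suc_Suc[of "of_int N :: complex" i] by simp
  have idx: "int (Suc i) - (k + 1) - 1 = int i - k - 1" for i by simp
  have s: "(\<Sum>i<C. sc (of_int (N+1) gchoose Suc i) (W i)) = (\<Sum>i<C. sc (of_int N gchoose i) (W i)) + (\<Sum>i<C. sc (of_int N gchoose Suc i) (W i))" for W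
    unfolding g by (simp add: vs.scale_left_distrib sum.distrib)
  show ?thesis unfolding e1 e2 e3 sum.lessThan_Suc_shift idx s by (simp add: add_ac)
qed

lemma resop_D:
  "resop sc Y (N + 1) k (Y om 0 x) v =
     sc (of_int (k - N)) (resop sc Y N k x v) + sc (of_int (k + 1)) (resop sc Y N (k + 1) x v)"
proof -
  obtain T where T: "\<forall>n\<ge>T. Y x n v = 0" using trunc by blast
  have T': "\<forall>n\<ge>T+1. Y (Y om 0 x) n v = 0" using T by (simp add: Dprop)
  define C where "C = nat (T + k + 2)"
  have e1: "resop sc Y (N + 1) k (Y om 0 x) v = (\<Sum>j<Suc C. sc (of_int (N+1) gchoose j) (Y (Y om 0 x) (int j - k - 1) v))"
    by (rule resop_sum[OF T']) (simp add: C_def)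
  have e2: "resop sc Y N (k + 1) x v = (\<Sum>j<Suc C. sc (of_int N gchoose j) (Y x (int j - (k+1) - 1) v))"
    by (rule resop_sum[OF T]) (simp add: C_def)
  have e3: "resop sc Y N k x v = (\<Sum>j<C. sc (of_int N gchoose j) (Y x (int j - k - 1) v))"
    by (rule resop_sum[OF T]) (simp add: C_def)
  have coef: "(of_int (N+1) gchoose Suc i) * of_int (- (int (Suc i) - k - 1)) =
     of_int (k - N) * (of_int N gchoose i) + of_int (k + 1) * (of_int N gchoose Suc i :: complex)" for i
  proof -
    have g: "(of_int (N+1) gchoose Suc i :: complex) = (of_int N gchoose i) + (of_int N gchoose Suc i)"
      using gbinomial_Suc_Suc[of "of_int N :: complex" i] by simp
    have m: "(of_int N :: complex) * (of_int N gchoose i) = of_nat i * (of_int N gchoose i) + of_nat (Suc i) * (of_int N gchoose Suc i)"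
      by (rule gbinomial_mult_1)
    show ?thesis unfolding g using m by (simp add: algebra_simps)
  qed
  have idx: "int (Suc i) - (k + 1) - 1 = int i - k - 1" for i by simp
  have idx2: "int (Suc i) - k - 1 - 1 = int i - k - 1" for i by simp
  have "resop sc Y (N + 1) k (Y om 0 x) v =
     sc (of_int (k+1)) (Y x (- k - 2) v) +
     (\<Sum>i<C. sc ((of_int (N+1) gchoose Suc i) * of_int (- (int (Suc i) - k - 1))) (Y x (int i - k - 1) v))"
    unfolding e1 sum.lessThan_Suc_shift by (simp add: Dprop idx2 algebra_simps)
  also have "\<dots> = sc (of_int (k+1)) (Y x (- k - 2) v) +
     (\<Sum>i<C. sc (of_int (k - N) * (of_int N gchoose i)) (Y x (int i - k - 1) v) + sc (of_int (k + 1) * (of_int N gchoose Suc i)) (Y x (int i - k - 1) v))"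
    unfolding coef by (simp add: vs.scale_left_distrib)
  also have "\<dots> = sc (of_int (k - N)) (resop sc Y N k x v) + sc (of_int (k + 1)) (resop sc Y N (k + 1) x v)"
    unfolding e2 e3 sum.lessThan_Suc_shift idx vs.scale_sum_right vs.scale_scale vs.scale_right_distrib sum.distrib
    by (simp add: add_ac mult_ac)
  finally show ?thesis .
qed


lemma L0_Lm1: "Y om 1 (Y om 0 v) = Y om 0 (Y om 1 v) + Y om 0 v"
  using vir[of 0 "-1" v] by (simp add: algebra_simps)

lemma L0_Lm1_eig: "Y om 1 x = sc d x \<Longrightarrow> Y om 1 (Y om 0 x) = sc (d + 1) (Y om 0 x)"
  by (simp add: L0_Lm1 Y_sc2 vs.scale_left_distrib)

lemma Lm1_hom:
  assumes u: "u \<in> Vn a"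
  shows "Y om 0 u \<in> Vn (a + 1)"
proof -
  define y where "y = Y om 0 u"
  have Ly: "Y om 1 y = sc (of_int (a + 1)) y"
    unfolding y_def using L0_Lm1_eig[OF L0_hom[OF u]] by simp
  obtain f where f: "finite {n. f n \<noteq> 0}" "\<forall>n. f n \<in> Vn n" "y = sum f {n. f n \<noteq> 0}"
    using decomp by blast
  define S where "S = {n. f n \<noteq> 0}"
  define g where "g n = sc (of_int n - of_int (a + 1)) (f n)" for n
  have "Y om 1 y = (\<Sum>n\<in>S. sc (of_int n) (f n))"
    unfolding f(3) S_def[symmetric] Y_sum2 using f(2) by (auto intro!: sum.cong L0_hom)
  moreover have "sc (of_int (a + 1)) y = (\<Sum>n\<in>S. sc (of_int (a+1)) (f n))"
    unfolding f(3) S_def[symmetric] vs.scale_sum_right ..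
  ultimately have "(\<Sum>n\<in>S. g n) = 0"
    unfolding g_def vs.scale_left_diff_distrib sum_subtractf using Ly by simp
  moreover have "sum g {n. g n \<noteq> 0} = sum g S"
    by (rule sum.mono_neutral_left) (auto simp: S_def g_def f(1))
  moreover have "finite {n. g n \<noteq> 0}"
    by (rule finite_subset[OF _ f(1)]) (auto simp: g_def)
  moreover have "\<forall>n. g n \<in> Vn n" using f(2) Vn_sc g_def by simp
  ultimately have g0: "g n = 0" for n using uniq by metis
  have fz: "n \<noteq> a + 1 \<Longrightarrow> f n = 0" for n
  proof -
    assume "n \<noteq> a + 1"
    then have "(of_int n :: complex) \<noteq> of_int (a + 1)" by (metis of_int_eq_iff)
    then show "f n = 0" using g0[of n] by (simp add: g_def)
  qed
  have "y = (\<Sum>n\<in>S. if n = a + 1 then f n else 0)"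
    unfolding f(3) S_def[symmetric] by (rule sum.cong) (auto simp: fz)
  also have "\<dots> = (if a + 1 \<in> S then f (a+1) else 0)"
    using f(1) by (simp add: S_def)
  finally show ?thesis unfolding y_def using f(2) Vn_zero by simp
qed

definition Lgen where "Lgen = {Y om 0 u + Y om 1 u | u. True}"
definition Gen where "Gen n = {circ_op sc Y w n n u v | w u v. u \<in> Vn w} \<union> Lgen"

lemma O_eq: "O_space sc Y om Vn n = vs.span (Gen n)"
  unfolding O_space_def cspan_eq Gen_def Lgen_def ..

lemma circ_eq: "circ_op sc Y w n n u v = resop sc Y (w + int n) (int n + int n + 1) u v"
  unfolding circ_op_def ..

lemma star_eq: "star_op sc Y w m 0 m u v = resop sc Y (w + int m) (int m + int m) u v"
  unfolding star_op_def by simp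

lemma circ_in: "u \<in> Vn w \<Longrightarrow> resop sc Y (w + int n) (int n + int n + 1) u v \<in> O_space sc Y om Vn n"
  unfolding O_eq circ_eq[symmetric] by (rule vs.span_base) (auto simp: Gen_def)

lemma Lgen_in: "Y om 0 u + Y om 1 u \<in> O_space sc Y om Vn n"
  unfolding O_eq by (rule vs.span_base) (auto simp: Gen_def Lgen_def)

lemma P_lemma:
  "u \<in> Vn a \<Longrightarrow> resop sc Y (a + int n) (int n + int n + 1 + int p) u v \<in> O_space sc Y om Vn n"
proof (induction p arbitrary: a u)
  case 0
  then show ?case using circ_in by simp
next
  case (Suc p)
  define N where "N = a + int n"
  define k where "k = int n + int n + 1 + int p"
  have D: "resop sc Y (N + 1) k (Y om 0 u) v =
     sc (of_int (k - N)) (resop sc Y N k u v) + sc (of_int (k + 1)) (resop sc Y N (k + 1) u v)"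
    by (rule resop_D)
  have i1: "resop sc Y (N + 1) k (Y om 0 u) v \<in> O_space sc Y om Vn n"
    using Suc.IH[OF Lm1_hom[OF Suc.prems]] unfolding N_def k_def by (simp add: add_ac)
  have i2: "resop sc Y N k u v \<in> O_space sc Y om Vn n"
    using Suc.IH[OF Suc.prems] unfolding N_def k_def .
  have "sc (of_int (k + 1)) (resop sc Y N (k + 1) u v) \<in> O_space sc Y om Vn n"
  proof -
    have "sc (of_int (k + 1)) (resop sc Y N (k + 1) u v) =
          resop sc Y (N + 1) k (Y om 0 u) v - sc (of_int (k - N)) (resop sc Y N k u v)"
      using D by (simp add: algebra_simps)
    then show ?thesis unfolding O_eq using i1 i2 unfolding O_eq
      by (simp add: vs.span_diff vs.span_scale)
  qed
  then have "sc (inverse (of_int (k + 1))) (sc (of_int (k + 1)) (resop sc Y N (k + 1) u v)) \<in> O_space sc Y om Vn n"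
    unfolding O_eq by (rule vs.span_scale)
  moreover have "k + 1 \<noteq> 0" unfolding k_def by linarith
  then have "(of_int (k + 1) :: complex) \<noteq> 0" by (metis of_int_eq_0_iff)
  ultimately have "resop sc Y N (k + 1) u v \<in> O_space sc Y om Vn n" by simp
  then show ?case unfolding N_def k_def by (simp add: add_ac)
qed

lemma Om_sub:
  assumes "m \<ge> 1"
  shows "O_space sc Y om Vn m \<subseteq> O_space sc Y om Vn (m - 1)"
proof -
  define n where "n = m - 1"
  have mn: "int m = int n + 1" using assms by (simp add: n_def)
  have "Gen m \<subseteq> O_space sc Y om Vn n"
  proof
    fix x assume "x \<in> Gen m"
    then consider (c) w u v where "u \<in> Vn w" "x = circ_op sc Y w m m u v" | (l) "x \<in> Lgen"
      unfolding Gen_def by blast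
    then show "x \<in> O_space sc Y om Vn n"
    proof cases
      case c
      have "x = resop sc Y ((w + int n) + 1) ((int n + int n + 1 + 1) + 1) u v"
        using c(2) unfolding circ_eq mn by (simp add: add_ac)
      also have "\<dots> = resop sc Y (w + int n) (int n + int n + 1 + int 2) u v
                      + resop sc Y (w + int n) (int n + int n + 1 + int 1) u v"
        unfolding resop_pascal by (simp add: add_ac)
      finally show ?thesis using vs.span_add[OF P_lemma[OF c(1), of n 2 v, unfolded O_eq] P_lemma[OF c(1), of n 1 v, unfolded O_eq]] unfolding O_eq by simp
    next
      case l then show ?thesis using Lgen_in unfolding Lgen_def by auto
    qed
  qed
  then show ?thesis unfolding n_def O_eq[of m] O_eq[of "m-1"] by (rule vs.span_minimal) simp
qed

lemma star_in:
  assumes "m \<ge> 1" "u \<in> Vn w"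
  shows "star_op sc Y w m 0 m u v \<in> O_space sc Y om Vn (m - 1)"
proof -
  define n where "n = m - 1"
  have mn: "int m = int n + 1" using assms by (simp add: n_def)
  have "star_op sc Y w m 0 m u v = resop sc Y ((w + int n) + 1) ((int n + int n + 1) + 1) u v"
    unfolding star_eq mn by (simp add: add_ac)
  also have "\<dots> = resop sc Y (w + int n) (int n + int n + 1 + int 1) u v
                  + resop sc Y (w + int n) (int n + int n + 1 + int 0) u v"
    unfolding resop_pascal by (simp add: add_ac)
  finally show ?thesis using vs.span_add[OF P_lemma[OF assms(2), of n 1 v, unfolded O_eq] P_lemma[OF assms(2), of n 0 v, unfolded O_eq]] unfolding n_def O_eq by simp
qed


lemma one_gchoose: "((1::complex) gchoose i) = (if i \<le> 1 then 1 else 0)"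
proof -
  have "((1::complex) gchoose i) = of_nat (1 choose i)" by (metis binomial_gbinomial of_nat_1)
  then show ?thesis by (cases i) auto
qed

lemma mone_gchoose: "((-1::complex) gchoose i) = (-1) ^ i"
proof -
  have "((-1::complex) gchoose i) = (-1) ^ i * ((1 + of_nat i - 1) gchoose i)"
    by (rule gbinomial_minus)
  also have "((1 + of_nat i - 1 :: complex) gchoose i) = 1"
    by (simp add: binomial_gbinomial[symmetric])
  finally show ?thesis by simp
qed

lemma L0_mode:
  assumes "Y om 1 u = sc a u" "Y om 1 v = sc b v"
  shows "Y om 1 (Y u n v) = sc (a + b - of_int n - 1) (Y u n v)"
proof -
  have B: "fsum (\<lambda>i. sc ((of_int 1 gchoose i)) (Y (Y om (0 + int i) u) (1 + n - int i) v)) =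
        fsum (\<lambda>i. sc ((-1) ^ i * (of_int 0 gchoose i))
                 (Y om (1 + 0 - int i) (Y u (n + int i) v)
                  - sc (if even (0::int) then 1 else -1) (Y u (n + 0 - int i) (Y om (1 + int i) v))))"
    by (rule borch)
  have l: "fsum (\<lambda>i. sc ((of_int 1 gchoose i)) (Y (Y om (0 + int i) u) (1 + n - int i) v)) =
     sc (- of_int (1 + n)) (Y u n v) + sc a (Y u n v)"
  proof -
    have "fsum (\<lambda>i. sc ((of_int 1 gchoose i)) (Y (Y om (0 + int i) u) (1 + n - int i) v)) =
        (\<Sum>i<2. sc ((of_int 1 gchoose i)) (Y (Y om (0 + int i) u) (1 + n - int i) v))"
      by (rule fsum_eq) (simp add: one_gchoose)
    also have "\<dots> = sc (- of_int (1 + n)) (Y u n v) + sc a (Y u n v)"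
      by (simp add: numeral_2_eq_2 Dprop assms Y_sc1)
    finally show ?thesis .
  qed
  have r: "fsum (\<lambda>i. sc ((-1) ^ i * (of_int 0 gchoose i))
                 (Y om (1 + 0 - int i) (Y u (n + int i) v)
                  - sc (if even (0::int) then 1 else -1) (Y u (n + 0 - int i) (Y om (1 + int i) v)))) =
        Y om 1 (Y u n v) - sc b (Y u n v)"
  proof -
    have "fsum (\<lambda>i. sc ((-1) ^ i * (of_int 0 gchoose i))
                 (Y om (1 + 0 - int i) (Y u (n + int i) v)
                  - sc (if even (0::int) then 1 else -1) (Y u (n + 0 - int i) (Y om (1 + int i) v)))) =
       (\<Sum>i<1. sc ((-1) ^ i * (of_int 0 gchoose i))
                 (Y om (1 + 0 - int i) (Y u (n + int i) v)
                  - sc (if even (0::int) then 1 else -1) (Y u (n + 0 - int i) (Y om (1 + int i) v))))"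
      by (rule fsum_eq) (simp add: gbinomial_0_left)
    also have "\<dots> = Y om 1 (Y u n v) - sc b (Y u n v)"
      by (simp add: assms Y_sc2)
    finally show ?thesis .
  qed
  have H: "sc (- of_int (1 + n)) (Y u n v) + sc a (Y u n v) = Y om 1 (Y u n v) - sc b (Y u n v)"
    using B unfolding l r .
  have "Y om 1 (Y u n v) = sc (- of_int (1 + n)) (Y u n v) + sc a (Y u n v) + sc b (Y u n v)"
    using H by (simp add: eq_diff_eq)
  also have "\<dots> = sc (a + b - of_int n - 1) (Y u n v)"
  proof -
    have "(- of_int (1 + n) + a + b :: complex) = a + b - of_int n - 1" by simp
    then show ?thesis by (simp only: vs.scale_left_distrib[symmetric])
  qed
  finally show ?thesis .
qed

definition O0 where "O0 = vs.span Lgen"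

lemma O0_sub: "O0 \<subseteq> O_space sc Y om Vn n"
  unfolding O0_def O_eq Gen_def by (rule vs.span_mono) auto

lemma creation_mod:
  "Y om 1 x = sc d x \<Longrightarrow> Y x (-1 - int i) vac - sc ((- d) gchoose i) x \<in> O0"
proof (induction i arbitrary: x d)
  case 0
  then show ?case by (simp add: create1 O0_def vs.span_zero)
next
  case (Suc i)
  define Z where "Z = Y x (-1 - int (Suc i)) vac"
  define L where "L = Y om 0 x"
  define c where "c = ((- d - 1) gchoose i)"
  define e :: complex where "e = inverse (of_nat (Suc i))"
  have IH: "Y L (-1 - int i) vac - sc c L \<in> O0"
  proof -
    have h: "- (d + 1) = - d - 1" by simp
    show ?thesis using Suc.IH[OF L0_Lm1_eig[OF Suc.prems]] unfolding L_def c_def h .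
  qed
  have Lg: "L + sc d x \<in> O0"
    unfolding O0_def L_def Suc.prems[symmetric] by (rule vs.span_base) (auto simp: Lgen_def)
  have D: "Y L (-1 - int i) vac = sc (of_nat (Suc i)) Z"
  proof -
    have "Y L (-1 - int i) vac = sc (of_int (- (-1 - int i))) (Y x (-1 - int i - 1) vac)"
      unfolding L_def by (rule Dprop)
    also have "(of_int (- (-1 - int i)) :: complex) = of_nat (Suc i)" by simp
    also have "-1 - int i - 1 = -1 - int (Suc i)" by simp
    finally show ?thesis unfolding Z_def .
  qed
  have e1: "e * of_nat (Suc i) = 1" unfolding e_def by (simp del: of_nat_Suc)
  have ab: "of_nat (Suc i) * ((- d) gchoose Suc i) = (- d) * ((- d - 1) gchoose i)"
    by (rule gbinomial_absorption)
  have e2: "e * c * d = - ((- d) gchoose Suc i)"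
  proof -
    have "(- d) gchoose Suc i = e * ((- d) * ((- d - 1) gchoose i))"
      unfolding ab[symmetric] e_def by (simp del: of_nat_Suc)
    then show ?thesis unfolding c_def by (simp add: algebra_simps)
  qed
  have "sc e (Y L (-1 - int i) vac - sc c L) + sc (e * c) (L + sc d x) = sc (e * of_nat (Suc i)) Z + sc (e * c * d) x"
    unfolding D by (simp add: algebra_simps)
  also have "\<dots> = Z - sc ((- d) gchoose Suc i) x" unfolding e1 e2 by simp
  finally have "Z - sc ((- d) gchoose Suc i) x = sc e (Y L (-1 - int i) vac - sc c L) + sc (e * c) (L + sc d x)" ..
  moreover have "sc e (Y L (-1 - int i) vac - sc c L) + sc (e * c) (L + sc d x) \<in> O0"
    using IH Lg unfolding O0_def by (rule vs.span_add[OF vs.span_scale vs.span_scale])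
  ultimately show ?case unfolding Z_def[symmetric] by (simp only:)
qed


lemma skew:
  "fsum (\<lambda>i. sc ((-1)^i) (Y (Y u (r + int i) v) (-1 - int i) vac)) = - sc (if even r then 1 else -1) (Y v r u)"
proof -
  have B: "fsum (\<lambda>i. sc ((of_int (-1) gchoose i)) (Y (Y u (r + int i) v) (-1 + 0 - int i) vac)) =
        fsum (\<lambda>i. sc ((-1) ^ i * (of_int r gchoose i))
                 (Y u (-1 + r - int i) (Y v (0 + int i) vac)
                  - sc (if even r then 1 else -1) (Y v (0 + r - int i) (Y u (-1 + int i) vac))))"
    by (rule borch)
  have L: "fsum (\<lambda>i. sc ((of_int (-1) gchoose i)) (Y (Y u (r + int i) v) (-1 + 0 - int i) vac)) =
     fsum (\<lambda>i. sc ((-1)^i) (Y (Y u (r + int i) v) (-1 - int i) vac))"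
    by (simp add: mone_gchoose)
  have R: "fsum (\<lambda>i. sc ((-1) ^ i * (of_int r gchoose i))
                 (Y u (-1 + r - int i) (Y v (0 + int i) vac)
                  - sc (if even r then 1 else -1) (Y v (0 + r - int i) (Y u (-1 + int i) vac)))) =
       (\<Sum>i<1. sc ((-1) ^ i * (of_int r gchoose i))
                 (Y u (-1 + r - int i) (Y v (0 + int i) vac)
                  - sc (if even r then 1 else -1) (Y v (0 + r - int i) (Y u (-1 + int i) vac))))"
    by (rule fsum_eq) (simp add: create2)
  show ?thesis using B unfolding L R by (simp add: create1 create2)
qed

lemma skew_fin:
  assumes "\<forall>n\<ge>T. Y u n v = 0" "T \<le> r + int C"
  shows "Y v r u = - sc (if even r then 1 else -1) (\<Sum>i<C. sc ((-1)^i) (Y (Y u (r + int i) v) (-1 - int i) vac))"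
proof -
  define s :: complex where "s = (if even r then 1 else -1)"
  have "fsum (\<lambda>i. sc ((-1)^i) (Y (Y u (r + int i) v) (-1 - int i) vac)) = (\<Sum>i<C. sc ((-1)^i) (Y (Y u (r + int i) v) (-1 - int i) vac))"
    by (rule fsum_eq) (use assms in auto)
  then have F: "(\<Sum>i<C. sc ((-1)^i) (Y (Y u (r + int i) v) (-1 - int i) vac)) = - sc s (Y v r u)"
    using skew unfolding s_def by simp
  have ss: "s * s = 1" unfolding s_def by simp
  show ?thesis unfolding s_def[symmetric] F using ss by simp
qed

lemma vr_decomp:
  assumes u: "Y om 1 u = sc (of_int a) u" and v: "Y om 1 v = sc (of_int b) v"
    and T: "\<forall>n\<ge>T. Y u n v = 0" "T \<le> r + int C"
  shows "Y v r u = (\<Sum>i<C. sc (- (if even r then 1 else -1) * (-1)^i)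
                      (Y (Y u (r + int i) v) (-1 - int i) vac
                        - sc ((- (of_int a + of_int b - of_int (r + int i) - 1)) gchoose i) (Y u (r + int i) v)))
           + (\<Sum>i<C. sc (- (if even r then 1 else -1) * (-1)^i *
                ((- (of_int a + of_int b - of_int (r + int i) - 1)) gchoose i)) (Y u (r + int i) v))"
proof -
  define s :: complex where "s = (if even r then 1 else -1)"
  define g where "g i = ((- (of_int a + of_int b - of_int (r + int i) - 1)) gchoose i :: complex)" for i
  define X where "X i = Y u (r + int i) v" for i
  define E where "E i = Y (X i) (-1 - int i) vac - sc (g i) (X i)" for i
  have "Y v r u = - sc s (\<Sum>i<C. sc ((-1)^i) (E i + sc (g i) (X i)))"
    using skew_fin[OF T] unfolding s_def[symmetric] E_def X_def by simp
  also have "\<dots> = (\<Sum>i<C. sc (- s * (-1)^i) (E i) + sc (- s * (-1)^i * g i) (X i))"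
    unfolding vs.scale_sum_right sum_negf[symmetric]
    by (rule sum.cong) (simp_all add: vs.scale_right_distrib)
  also have "\<dots> = (\<Sum>i<C. sc (- s * (-1)^i) (E i)) + (\<Sum>i<C. sc (- s * (-1)^i * g i) (X i))"
    by (rule sum.distrib)
  finally show ?thesis unfolding s_def E_def X_def g_def .
qed

lemma E_in:
  assumes u: "Y om 1 u = sc (of_int a) u" and v: "Y om 1 v = sc (of_int b) v"
  shows "Y (Y u n v) (-1 - int i) vac
                        - sc ((- (of_int a + of_int b - of_int n - 1)) gchoose i) (Y u n v) \<in> O0"
  by (rule creation_mod[OF L0_mode[OF u v]])

lemma rect_tri:
  fixes C C0 :: nat and W :: "nat \<Rightarrow> 'v"
  assumes W: "\<forall>K\<ge>C0. W K = 0" and C: "C0 \<le> C"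
  shows "(\<Sum>j<C. \<Sum>i<C. sc (h i j) (W (i + j))) = (\<Sum>K<C0. sc (\<Sum>i\<le>K. h i (K - i)) (W K))"
proof -
  have "(\<Sum>j<C. \<Sum>i<C. sc (h i j) (W (i + j))) = (\<Sum>(i,j)\<in>{..<C} \<times> {..<C}. sc (h i j) (W (i + j)))"
  proof -
    have "(\<Sum>j<C. \<Sum>i<C. sc (h i j) (W (i + j))) = (\<Sum>i<C. \<Sum>j<C. sc (h i j) (W (i + j)))"
      by (rule sum.swap)
    then show ?thesis by (simp only: sum.cartesian_product)
  qed
  also have "\<dots> = (\<Sum>(i,j)\<in>{(i,j). i + j < C0}. sc (h i j) (W (i + j)))"
  proof (rule sum.mono_neutral_right)
    show "finite ({..<C} \<times> {..<C})" by simp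
    show "{(i,j). i + j < C0} \<subseteq> {..<C} \<times> {..<C}" using C by auto
    show "\<forall>x\<in>{..<C} \<times> {..<C} - {(i,j). i + j < C0}. (\<lambda>(i,j). sc (h i j) (W (i + j))) x = 0"
      using W by (auto simp: not_less) (meson not_less)
  qed
  also have "\<dots> = (\<Sum>K<C0. \<Sum>i\<le>K. sc (h i (K - i)) (W (i + (K - i))))"
    by (rule sum.triangle_reindex[of "\<lambda>i j. sc (h i j) (W (i + j))"])
  also have "\<dots> = (\<Sum>K<C0. sc (\<Sum>i\<le>K. h i (K - i)) (W K))"
  proof (rule sum.cong[OF refl])
    fix K assume "K \<in> {..<C0}"
    have "(\<Sum>i\<le>K. sc (h i (K - i)) (W (i + (K - i)))) = (\<Sum>i\<le>K. sc (h i (K - i)) (W K))"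
      by (rule sum.cong) auto
    then show "(\<Sum>i\<le>K. sc (h i (K - i)) (W (i + (K - i)))) = sc (\<Sum>i\<le>K. h i (K - i)) (W K)"
      by (simp add: vs.scale_sum_left)
  qed
  finally show ?thesis .
qed


lemma sign_lemma: "- (if even (int j - int k - 1) then 1 else -1 :: complex) = (-1)^(j+k)"
proof -
  have "even (int j - int k - 1) \<longleftrightarrow> \<not> even (j + k)" by presburger
  then show ?thesis by (simp add: minus_one_power_iff)
qed

lemma coef:
  fixes a b N :: int and k K :: nat
  shows "(\<Sum>i\<le>K. (of_int (a + b - N + int k - 1) gchoose (K - i)) *
      (- (if even (int (K - i) - int k - 1) then 1 else -1) * (-1)^i *
       ((- (of_int a + of_int b - of_int (int (K - i) - int k - 1 + int i) - 1)) gchoose i)))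
    = (-1)^k * (of_int N gchoose K :: complex)"
proof -
  define M :: complex where "M = of_int (a + b - N + int k - 1)"
  define P :: complex where "P = of_int (int K - int k - a - b)"
  have t: "(of_int (a + b - N + int k - 1) gchoose (K - i)) *
      (- (if even (int (K - i) - int k - 1) then 1 else -1) * (-1)^i *
       ((- (of_int a + of_int b - of_int (int (K - i) - int k - 1 + int i) - 1)) gchoose i))
     = (-1)^(K+k) * ((P gchoose i) * (M gchoose (K - i)))" if "i \<in> {..K}" for i
  proof -
    from that have iK: "i \<le> K" by simp
    have s1: "- (if even (int (K - i) - int k - 1) then 1 else -1 :: complex) * (-1)^i = (-1)^(K+k)"
    proof -
      have "(-1::complex)^(K - i + k) * (-1)^i = (-1)^(K - i + k + i)" by (simp add: power_add)
      also have "K - i + k + i = K + k" using iK by simp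
      finally show ?thesis unfolding sign_lemma .
    qed
    have p: "(- (of_int a + of_int b - of_int (int (K - i) - int k - 1 + int i) - 1) :: complex) = P"
      unfolding P_def using iK by (simp add: of_nat_diff)
    show ?thesis unfolding p s1 M_def[symmetric] by (simp add: mult_ac)
  qed
  have "(\<Sum>i\<le>K. (of_int (a + b - N + int k - 1) gchoose (K - i)) *
      (- (if even (int (K - i) - int k - 1) then 1 else -1) * (-1)^i *
       ((- (of_int a + of_int b - of_int (int (K - i) - int k - 1 + int i) - 1)) gchoose i)))
     = (\<Sum>i\<le>K. (-1)^(K+k) * ((P gchoose i) * (M gchoose (K - i))))"
    by (rule sum.cong[OF refl t])
  also have "\<dots> = (-1)^(K+k) * (\<Sum>i\<le>K. (P gchoose i) * (M gchoose (K - i)))"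
    by (simp add: sum_distrib_left)
  also have "(\<Sum>i\<le>K. (P gchoose i) * (M gchoose (K - i))) = (P + M) gchoose K"
    using gbinomial_Vandermonde[of P M K] by (simp add: atLeast0AtMost)
  also have "P + M = of_nat K - of_int N - 1" unfolding P_def M_def by simp
  also have "(-1)^(K+k) * ((of_nat K - of_int N - 1) gchoose K) = (-1)^k * ((-1)^K * ((of_nat K - of_int N - 1) gchoose K) :: complex)"
    by (simp add: power_add mult_ac)
  also have "(-1)^K * ((of_nat K - of_int N - 1) gchoose K) = (of_int N gchoose K :: complex)"
    using gbinomial_negated_upper[of "of_int N :: complex" K] by simp
  finally show ?thesis .
qed

lemma skew_main:
  assumes u: "Y om 1 u = sc (of_int a) u" and v: "Y om 1 v = sc (of_int b) v"
  shows "resop sc Y N (int k) u v - sc ((-1)^k) (resop sc Y (a + b - N + int k - 1) (int k) v u) \<in> O0"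
proof -
  obtain T where T: "\<forall>n\<ge>T. Y u n v = 0" using trunc by blast
  obtain T2 where T2: "\<forall>n\<ge>T2. Y v n u = 0" using trunc by blast
  define C where "C = nat (max T T2 + int k + 1)"
  define C0 where "C0 = nat (T + int k + 1)"
  define M where "M = a + b - N + int k - 1"
  define s where "s j = (if even (int j - int k - 1) then 1 else -1 :: complex)" for j
  define g where "g j i = ((- (of_int a + of_int b - of_int (int j - int k - 1 + int i) - 1)) gchoose i :: complex)" for j i
  define E where "E j i = Y (Y u (int j - int k - 1 + int i) v) (-1 - int i) vac - sc (g j i) (Y u (int j - int k - 1 + int i) v)" for j i
  define W where "W K = Y u (int K - int k - 1) v" for K
  define h where "h i j = (of_int M gchoose j) * (- s j * (-1)^i * g j i)" for i j
  have eM: "resop sc Y M (int k) v u = (\<Sum>j<C. sc (of_int M gchoose j) (Y v (int j - int k - 1) u))"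
    by (rule resop_sum[OF T2]) (simp add: C_def)
  have eN: "resop sc Y N (int k) u v = (\<Sum>K<C0. sc (of_int N gchoose K) (W K))"
    unfolding W_def by (rule resop_sum[OF T]) (simp add: C0_def)
  have dec: "Y v (int j - int k - 1) u = (\<Sum>i<C. sc (- s j * (-1)^i) (E j i)) + (\<Sum>i<C. sc (- s j * (-1)^i * g j i) (W (i + j)))" for j
  proof -
    have TT: "T \<le> (int j - int k - 1) + int C" unfolding C_def by linarith
    have Wij: "W (i + j) = Y u (int j - int k - 1 + int i) v" for i
      unfolding W_def by (simp add: algebra_simps)
    show ?thesis using vr_decomp[OF u v T TT] unfolding Wij s_def g_def E_def .
  qed
  define P1 where "P1 = (\<Sum>j<C. sc (of_int M gchoose j) (\<Sum>i<C. sc (- s j * (-1)^i) (E j i)))"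
  have P1: "P1 \<in> O0"
    unfolding P1_def O0_def
  proof (intro vs.span_sum vs.span_scale)
    fix j i
    show "E j i \<in> vs.span Lgen" unfolding E_def g_def using E_in[OF u v, of "int j - int k - 1 + int i" i] unfolding O0_def .
  qed
  have "(\<Sum>j<C. sc (of_int M gchoose j) (\<Sum>i<C. sc (- s j * (-1)^i * g j i) (W (i + j))))
     = (\<Sum>j<C. \<Sum>i<C. sc (h i j) (W (i + j)))"
    by (simp add: vs.scale_sum_right h_def)
  also have "\<dots> = (\<Sum>K<C0. sc (\<Sum>i\<le>K. h i (K - i)) (W K))"
    by (rule rect_tri) (use T in \<open>auto simp: W_def C0_def C_def\<close>)
  also have "\<dots> = (\<Sum>K<C0. sc ((-1)^k * (of_int N gchoose K)) (W K))"
  proof (rule sum.cong[OF refl])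
    fix K
    have "(\<Sum>i\<le>K. h i (K - i)) = (-1)^k * (of_int N gchoose K)"
      unfolding h_def s_def g_def M_def by (rule coef)
    then show "sc (\<Sum>i\<le>K. h i (K - i)) (W K) = sc ((-1)^k * (of_int N gchoose K)) (W K)" by simp
  qed
  also have "\<dots> = sc ((-1)^k) (resop sc Y N (int k) u v)"
    unfolding eN by (simp add: vs.scale_sum_right)
  finally have P2: "(\<Sum>j<C. sc (of_int M gchoose j) (\<Sum>i<C. sc (- s j * (-1)^i * g j i) (W (i + j))))
      = sc ((-1)^k) (resop sc Y N (int k) u v)" .
  have "resop sc Y M (int k) v u = P1 + sc ((-1)^k) (resop sc Y N (int k) u v)"
    unfolding eM dec P1_def P2[symmetric] vs.scale_right_distrib sum.distrib ..
  then have "sc ((-1)^k) (resop sc Y M (int k) v u) = sc ((-1)^k) P1 + resop sc Y N (int k) u v"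
    by (simp add: vs.scale_right_distrib power_mult_distrib[symmetric])
  then have "resop sc Y N (int k) u v - sc ((-1)^k) (resop sc Y M (int k) v u) = - sc ((-1)^k) P1"
    by simp
  moreover have "- sc ((-1)^k) P1 \<in> O0" using P1 unfolding O0_def by (intro vs.span_neg vs.span_scale)
  ultimately show ?thesis unfolding M_def by simp
qed


lemma main:
  assumes m: "m \<ge> 1"
  shows "{x + y | x y. x \<in> cspan sc {star_op sc Y w m 0 m u v | w u v. u \<in> Vn w}
                      \<and> y \<in> O_space sc Y om Vn m}
         = O_space sc Y om Vn (m - 1)"
proof -
  define S where "S = {star_op sc Y w m 0 m u v | w u v. u \<in> Vn w}"
  define Lhs where "Lhs = {x + y | x y. x \<in> vs.span S \<and> y \<in> O_space sc Y om Vn m}"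
  define n where "n = m - 1"
  have mn: "int m = int n + 1" using m by (simp add: n_def)
  have Osub: "vs.subspace (O_space sc Y om Vn k)" for k unfolding O_eq by simp
  have SO: "vs.span S \<subseteq> O_space sc Y om Vn (m - 1)"
  proof (rule vs.span_minimal[OF _ Osub])
    show "S \<subseteq> O_space sc Y om Vn (m - 1)" unfolding S_def using star_in[OF m] by blast
  qed
  have sub: "Lhs \<subseteq> O_space sc Y om Vn (m - 1)"
  proof
    fix z assume "z \<in> Lhs"
    then obtain x y where "z = x + y" "x \<in> vs.span S" "y \<in> O_space sc Y om Vn m" unfolding Lhs_def by blast
    then show "z \<in> O_space sc Y om Vn (m - 1)"
      using SO Om_sub[OF m] vs.subspace_add[OF Osub] by blast
  qed
  have Lsub: "vs.subspace Lhs"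
  proof (rule vs.subspaceI)
    show "0 \<in> Lhs" unfolding Lhs_def using vs.span_zero vs.subspace_0[OF Osub] by force
  next
    fix x y assume "x \<in> Lhs" "y \<in> Lhs"
    then obtain x1 y1 x2 y2 where "x = x1 + y1" "x1 \<in> vs.span S" "y1 \<in> O_space sc Y om Vn m"
      "y = x2 + y2" "x2 \<in> vs.span S" "y2 \<in> O_space sc Y om Vn m" unfolding Lhs_def by blast
    moreover have "x + y = (x1 + x2) + (y1 + y2)" using calculation by (simp add: add_ac)
    ultimately show "x + y \<in> Lhs" unfolding Lhs_def
      using vs.span_add vs.subspace_add[OF Osub] by blast
  next
    fix c x assume "x \<in> Lhs"
    then obtain x1 y1 where "x = x1 + y1" "x1 \<in> vs.span S" "y1 \<in> O_space sc Y om Vn m" unfolding Lhs_def by blast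
    moreover have "sc c x = sc c x1 + sc c y1" using calculation by (simp add: vs.scale_right_distrib)
    ultimately show "sc c x \<in> Lhs" unfolding Lhs_def
      using vs.span_scale vs.subspace_scale[OF Osub] by blast
  qed
  have OL: "y \<in> O_space sc Y om Vn m \<Longrightarrow> y \<in> Lhs" for y
    unfolding Lhs_def using vs.span_zero by force
  have key: "resop sc Y (b + int n) (int n + int n + 1) p q \<in> Lhs" if p: "p \<in> Vn b" and q: "q \<in> Vn a" for p q a b
  proof -
    have sm: "resop sc Y (a + int m) (int (2*m)) q p - sc ((-1)^(2*m)) (resop sc Y (a + b - (a + int m) + int (2*m) - 1) (int (2*m)) p q) \<in> O0"
      by (rule skew_main[OF L0_hom[OF q] L0_hom[OF p]])
    have e1: "a + b - (a + int m) + int (2*m) - 1 = b + int n" using mn by simp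
    have e2: "int (2*m) = int n + int n + 1 + 1" using mn by simp
    have pw: "((-1::complex)^(2*m)) = 1" by (simp add: power_mult)
    define A where "A = star_op sc Y b m 0 m p q"
    define B where "B = star_op sc Y a m 0 m q p"
    define R2 where "R2 = resop sc Y (b + int n) (int n + int n + 1 + 1) p q"
    define Tt where "Tt = resop sc Y (b + int n) (int n + int n + 1) p q"
    have BR: "B - R2 \<in> O0" using sm unfolding e1 e2 pw B_def R2_def star_eq mn by (simp add: add_ac)
    have AR: "A = R2 + Tt" unfolding A_def R2_def Tt_def star_eq mn
      using resop_pascal[of "b + int n" "int n + int n + 1" p q] by (simp add: add_ac)
    have "Tt = (A - B) + (B - R2)" using AR by (simp add: algebra_simps)
    moreover have "A - B \<in> vs.span S" unfolding A_def B_def S_def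
      by (intro vs.span_diff vs.span_base) (use p q in auto)
    moreover have "B - R2 \<in> O_space sc Y om Vn m" using BR O0_sub by blast
    ultimately show ?thesis unfolding Tt_def Lhs_def by blast
  qed
  have "Gen n \<subseteq> Lhs"
  proof
    fix z assume "z \<in> Gen n"
    then consider (c) w p q where "p \<in> Vn w" "z = circ_op sc Y w n n p q" | (l) "z \<in> Lgen"
      unfolding Gen_def by blast
    then show "z \<in> Lhs"
    proof cases
      case c
      obtain f where f: "finite {k. f k \<noteq> 0}" "\<forall>k. f k \<in> Vn k" "q = sum f {k. f k \<noteq> 0}"
        using decomp by blast
      have "z = (\<Sum>k\<in>{k. f k \<noteq> 0}. resop sc Y (w + int n) (int n + int n + 1) p (f k))"
        unfolding c(2) circ_eq f(3) resop_sum2 ..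
      also have "\<dots> \<in> Lhs"
        by (rule vs.subspace_sum[OF Lsub]) (rule key[OF c(1) f(2)[rule_format]])
      finally show ?thesis .
    next
      case l then show ?thesis using OL Lgen_in unfolding Lgen_def by blast
    qed
  qed
  then have "O_space sc Y om Vn (m - 1) \<subseteq> Lhs"
    unfolding n_def O_eq[of "m - 1"] by (rule vs.span_minimal[OF _ Lsub])
  with sub have "Lhs = O_space sc Y om Vn (m - 1)" by blast
  then show ?thesis unfolding Lhs_def S_def cspan_eq .
qed

end

theorem lemma5p1:
  fixes sc :: "complex \<Rightarrow> 'v::ab_group_add \<Rightarrow> 'v"
    and Y :: "'v \<Rightarrow> int \<Rightarrow> 'v \<Rightarrow> 'v" and vac om :: 'v and cc :: complex
    and Vn :: "int \<Rightarrow> 'v set" and m :: nat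
  assumes "is_voa sc Y vac om cc Vn" and "m \<ge> 1"
  shows "{x + y | x y. x \<in> cspan sc {star_op sc Y w m 0 m u v | w u v. u \<in> Vn w}
                      \<and> y \<in> O_space sc Y om Vn m}
         = O_space sc Y om Vn (m - 1)"
proof -
  interpret voa_ctx sc Y vac om cc Vn by unfold_locales (rule assms(1))
  show ?thesis by (rule main[OF assms(2)])
qed

end
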